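(* Let $q \equiv 1 \pmod{14}$ be a prime power, let $\rho$ be a primitive element of $\mathbb F_q$, and let $g,h \in (\mathbb Z_2^3)^*$ with $g\neq h$. Then (i) $c^7_q\big(\Psi_1(h-g)-\Psi_1(g),\ \Psi_1(h)-\Psi_1(g)\big) = c^7_q(1,5)$; (ii) $c^7_q\big(\Psi_2(h-g)-\Psi_2(g),\ \Psi_2(h)-\Psi_2(g)\big) = c^7_q(1,3)$.
   Context: $(\mathbb Z_2^3)^* = \mathbb Z_2^3\setminus\{0\}$; elements are written $(x_2,x_1,x_0)$ and $\hat x\in\{0,1\}$ denotes the integer representative of $x\in\mathbb Z_2$. Define $\phi(x_2,x_1,x_0) = \hat x_0 + 2\hat x_1 + 4\hat x_2 \pmod 7$, $\operatorname{wt}(x_2,x_1,x_0) = \hat x_0+\hat x_1+\hat x_2$, $\sigma_+(x_2,x_1,x_0) = (x_1,x_0,x_2)$, $\sigma_-(x_2,x_1,x_0) = (x_0,x_2,x_1)$. Define $\Psi_1,\Psi_2 : (\mathbb Z_2^3)^* \to \mathbb Z_7$ by $\Psi_1(\mathbf x) = \phi(\sigma_+(\mathbf x))$ if $\operatorname{wt}(\mathbf x)$ is odd and $\phi(\sigma_-(\mathbf x))$ if even; $\Psi_2(\mathbf x) = \phi(\sigma_+(\mathbf x)+\mathbf x)$ if $\operatorname{wt}(\mathbf x)$ is odd and $\phi((1,1,1)+\mathbf x)$ if even. Cyclotomic numbers: write $q = 14r+1$; for $i\in\mathbb Z_7$, $C^7_q(i)=\{\rho^{7j+i}: 0\le j\le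 2r-1\}$, and $c^7_q(a,b)=|(C^7_q(a)+1)\cap C^7_q(b)|$ for $a,b\in\mathbb Z_7$. *)

theory Defs
  imports Main
begin

text \<open>Elements of Z_2^3 are triples (x2, x1, x0) of booleans (True = 1).\<close>
type_synonym z23 = "bool \<times> bool \<times> bool"

definition zero23 :: z23 where "zero23 = (False, False, False)"

definition bval :: "bool \<Rightarrow> int" where "bval b = (if b then 1 else 0)"

fun add23 :: "z23 \<Rightarrow> z23 \<Rightarrow> z23" where
  "add23 (a2, a1, a0) (b2, b1, b0) = (a2 \<noteq> b2, a1 \<noteq> b1, a0 \<noteq> b0)"

fun neg23 :: "z23 \<Rightarrow> z23" where
  "neg23 (a2, a1, a0) = (a2, a1, a0)"

definition sub23 :: "z23 \<Rightarrow> z23 \<Rightarrow> z23" where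
  "sub23 x y = add23 x (neg23 y)"

text \<open>Values in Z_7 are represented by integers in {0..6}.\<close>
fun phi :: "z23 \<Rightarrow> int" where
  "phi (x2, x1, x0) = (bval x0 + 2 * bval x1 + 4 * bval x2) mod 7"

fun wt :: "z23 \<Rightarrow> int" where
  "wt (x2, x1, x0) = bval x0 + bval x1 + bval x2"

fun sigma_plus :: "z23 \<Rightarrow> z23" where
  "sigma_plus (x2, x1, x0) = (x1, x0, x2)"

fun sigma_minus :: "z23 \<Rightarrow> z23" where
  "sigma_minus (x2, x1, x0) = (x0, x2, x1)"

definition Psi1 :: "z23 \<Rightarrow> int" where
  "Psi1 x = (if odd (wt x) then phi (sigma_plus x) else phi (sigma_minus x))"

definition Psi2 :: "z23 \<Rightarrow> int" where
  "Psi2 x = (if odd (wt x) then phi (add23 (sigma_plus x) x)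
             else phi (add23 (True, True, True) x))"

definition primitive_element :: "'a::{finite,field} \<Rightarrow> bool" where
  "primitive_element \<rho> \<longleftrightarrow> \<rho> \<noteq> 0 \<and> (\<forall>x. x \<noteq> 0 \<longrightarrow> (\<exists>k::nat. x = \<rho> ^ k))"

text \<open>Cyclotomic class C^7_q(i), q = CARD('a) = 14 r + 1; index i taken modulo 7.\<close>
definition cyc_class :: "'a::{finite,field} \<Rightarrow> int \<Rightarrow> 'a set" where
  "cyc_class \<rho> i =
     {\<rho> ^ (7 * j + nat (i mod 7)) | j. j < 2 * ((card (UNIV :: 'a set) - 1) div 14)}"

definition cyc_num :: "'a::{finite,field} \<Rightarrow> int \<Rightarrow> int \<Rightarrow> nat" where
  "cyc_num \<rho> a b = card ((\<lambda>x. x + 1) ` cyc_class \<rho> a \<inter> cyc_class \<rho> b)"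

end

theory Submission
  imports Defs
begin

lemma rho_pow_n:
  fixes \<rho> :: "'a::{finite,field}"
  assumes "\<rho> \<noteq> 0"
  shows "\<rho> ^ (card (UNIV :: 'a set) - 1) = 1"
proof -
  let ?U = "UNIV - {0::'a}"
  have fin: "finite ?U" by simp
  have bij: "bij_betw (\<lambda>x. \<rho> * x) ?U ?U"
    unfolding bij_betw_def inj_on_def
  proof (intro conjI ballI impI)
    show "(\<lambda>x. \<rho> * x) ` ?U = ?U"
    proof
      show "(\<lambda>x. \<rho> * x) ` ?U \<subseteq> ?U" using assms by auto
      show "?U \<subseteq> (\<lambda>x. \<rho> * x) ` ?U"
      proof
        fix y assume y: "y \<in> ?U"
        have "y = \<rho> * (inverse \<rho> * y)" using assms by (simp add: field_simps)
        moreover have "inverse \<rho> * y \<in> ?U" using assms y by auto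
        ultimately show "y \<in> (\<lambda>x. \<rho> * x) ` ?U" by blast
      qed
    qed
  qed (use assms in auto)
  have "prod id ?U = prod (\<lambda>x. \<rho> * x) ?U"
    using prod.reindex_bij_betw[OF bij, of id] by simp
  also have "\<dots> = \<rho> ^ card ?U * prod id ?U"
    by (simp add: prod.distrib)
  finally have eq: "prod id ?U = \<rho> ^ card ?U * prod id ?U" .
  have nz: "prod id ?U \<noteq> 0" by (simp add: prod_zero_iff)
  have "\<rho> ^ card ?U = 1" using eq nz by simp
  moreover have "card ?U = card (UNIV :: 'a set) - 1"
    by (simp add: card_Diff_singleton)
  ultimately show ?thesis by simp
qed

lemma rho_pow_mod:
  fixes \<rho> :: "'a::field"
  assumes "\<rho> ^ m = 1"
  shows "\<rho> ^ k = \<rho> ^ (k mod m)"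
proof -
  have "\<rho> ^ k = \<rho> ^ (m * (k div m) + k mod m)" by (metis div_mult_mod_eq mult.commute)
  also have "\<dots> = (\<rho> ^ m) ^ (k div m) * \<rho> ^ (k mod m)"
    by (simp only: power_add power_mult)
  finally show ?thesis using assms by simp
qed

lemma rho_order:
  fixes \<rho> :: "'a::{finite,field}"
  assumes "primitive_element \<rho>" "0 < m" "\<rho> ^ m = 1"
  shows "card (UNIV :: 'a set) - 1 \<le> m"
proof -
  have "UNIV - {0::'a} \<subseteq> (\<lambda>k. \<rho> ^ k) ` {..<m}"
  proof
    fix x :: 'a assume "x \<in> UNIV - {0}"
    then obtain k where "x = \<rho> ^ k" using assms(1) unfolding primitive_element_def by auto
    then have "x = \<rho> ^ (k mod m)" using rho_pow_mod[OF assms(3)] by simp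
    moreover have "k mod m < m" using assms(2) by simp
    ultimately show "x \<in> (\<lambda>k. \<rho> ^ k) ` {..<m}" by blast
  qed
  then have "card (UNIV - {0::'a}) \<le> card ((\<lambda>k. \<rho> ^ k) ` {..<m})"
    by (intro card_mono) auto
  also have "\<dots> \<le> m" using card_image_le[of "{..<m}" "\<lambda>k. \<rho> ^ k"] by simp
  finally show ?thesis by (simp add: card_Diff_singleton)
qed

definition Dk :: "'a::{finite,field} \<Rightarrow> int \<Rightarrow> 'a set" where
  "Dk \<rho> i = {\<rho> ^ k | k. int (k mod 7) = i mod 7}"

context
  fixes \<rho> :: "'a::{finite,field}"
  assumes q: "card (UNIV :: 'a set) mod 14 = 1"
    and pe: "primitive_element \<rho>"
begin

definition "nn = card (UNIV :: 'a set) - 1"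
definition "rr = (card (UNIV :: 'a set) - 1) div 14"

lemma card_form: "card (UNIV :: 'a set) = card (UNIV :: 'a set) div 14 * 14 + 1"
  using div_mult_mod_eq[of "card (UNIV :: 'a set)" 14] q by simp

lemma rr_eq: "rr = card (UNIV :: 'a set) div 14"
proof -
  have "rr = (card (UNIV :: 'a set) div 14 * 14 + 1 - 1) div 14"
    unfolding rr_def by (subst card_form, rule refl)
  also have "\<dots> = card (UNIV :: 'a set) div 14" by simp
  finally show ?thesis .
qed

lemma nn_eq: "nn = 14 * rr"
proof -
  have "nn = card (UNIV :: 'a set) div 14 * 14 + 1 - 1"
    unfolding nn_def by (subst card_form, rule refl)
  then show ?thesis using rr_eq by simp
qed

lemma rr_pos: "rr > 0"
proof -
  have "{0::'a, 1} \<subseteq> UNIV" by simp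
  then have "card {0::'a, 1} \<le> card (UNIV :: 'a set)" by (intro card_mono) auto
  then have c2: "card (UNIV :: 'a set) \<ge> 2" by simp
  show ?thesis
  proof (rule ccontr)
    assume "\<not> rr > 0"
    then have "card (UNIV :: 'a set) div 14 = 0" using rr_eq by simp
    then have "card (UNIV :: 'a set) = 1" using card_form by linarith
    then show False using c2 by simp
  qed
qed

lemma rho_nz: "\<rho> \<noteq> 0" using pe unfolding primitive_element_def by simp

lemma rho_n: "\<rho> ^ nn = 1" using rho_pow_n[OF rho_nz] unfolding nn_def .

lemma cyc_class_Dk: "cyc_class \<rho> i = Dk \<rho> i"
proof
  show "cyc_class \<rho> i \<subseteq> Dk \<rho> i"
  proof
    fix x assume "x \<in> cyc_class \<rho> i"
    then obtain j where x: "x = \<rho> ^ (7 * j + nat (i mod 7))"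
      unfolding cyc_class_def by auto
    have "(7 * j + nat (i mod 7)) mod 7 = nat (i mod 7)" by simp
    then have "int ((7 * j + nat (i mod 7)) mod 7) = i mod 7" by simp
    then show "x \<in> Dk \<rho> i" unfolding Dk_def using x by blast
  qed
  show "Dk \<rho> i \<subseteq> cyc_class \<rho> i"
  proof
    fix x assume "x \<in> Dk \<rho> i"
    then obtain k where x: "x = \<rho> ^ k" and k: "int (k mod 7) = i mod 7"
      unfolding Dk_def by auto
    have x2: "x = \<rho> ^ (k mod nn)" using x rho_pow_mod[OF rho_n] by simp
    have npos: "nn > 0" using nn_eq rr_pos by simp
    define j where "j = (k mod nn) div 7"
    have "(k mod nn) mod 7 = k mod 7" using nn_eq
      by (metis dvd_triv_left mod_mod_cancel mult.commute numeral_Bit0 dvd_mult2 mult_2)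
    moreover have "nat (i mod 7) = k mod 7" using k by simp
    ultimately have e: "k mod nn = 7 * j + nat (i mod 7)" unfolding j_def
      by (metis div_mult_mod_eq mult.commute add.commute)
    have "k mod nn < 14 * rr" using npos nn_eq by (metis mod_less_divisor)
    then have "j < 2 * rr" using e by linarith
    then show "x \<in> cyc_class \<rho> i" unfolding cyc_class_def rr_def[symmetric] using x2 e by auto
  qed
qed

lemma Dk_nz: "x \<in> Dk \<rho> a \<Longrightarrow> x \<noteq> 0"
  unfolding Dk_def using rho_nz by auto

lemma Dk_mult: "x \<in> Dk \<rho> a \<Longrightarrow> y \<in> Dk \<rho> b \<Longrightarrow> x * y \<in> Dk \<rho> (a + b)"
proof -
  assume "x \<in> Dk \<rho> a" "y \<in> Dk \<rho> b"
  then obtain k l where "x = \<rho> ^ k" "int (k mod 7) = a mod 7" "y = \<rho> ^ l" "int (l mod 7) = b mod 7"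
    unfolding Dk_def by auto
  moreover have "int ((k + l) mod 7) = (a + b) mod 7"
  proof -
    have "int k mod 7 = a mod 7" "int l mod 7 = b mod 7" using calculation(2,4) by (simp_all add: zmod_int)
    then have "(int k + int l) mod 7 = (a + b) mod 7" by (rule mod_add_cong)
    then show ?thesis by (simp add: zmod_int)
  qed
  moreover have "x * y = \<rho> ^ (k + l)" using calculation(1,3) by (simp add: power_add)
  ultimately show ?thesis unfolding Dk_def by blast
qed

lemma Dk_inv: "x \<in> Dk \<rho> a \<Longrightarrow> inverse x \<in> Dk \<rho> (- a)"
proof -
  assume "x \<in> Dk \<rho> a"
  then obtain k where x: "x = \<rho> ^ k" and k: "int (k mod 7) = a mod 7"
    unfolding Dk_def by auto
  define m where "m = k * (nn - 1)"
  have n1: "nn = Suc (nn - 1)" using nn_eq rr_pos by simp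
  have "k * nn = k * Suc (nn - 1)" by (rule arg_cong[where f="\<lambda>t. k * t"], rule n1)
  then have "m + k = k * nn" unfolding m_def by simp
  have "k * nn = 7 * (2 * k * rr)" unfolding nn_eq by simp
  then have "m + k = 7 * (2 * k * rr)" using \<open>m + k = k * nn\<close> by (simp only:)
  then have mk: "(m + k) mod 7 = 0" by (simp only: mod_mult_self1_is_0)
  have "\<rho> ^ m * \<rho> ^ k = 1"
  proof -
    have mk2: "m + k = nn * k" using \<open>m + k = k * nn\<close> by (simp add: mult.commute)
    have "\<rho> ^ m * \<rho> ^ k = \<rho> ^ (nn * k)"
      by (simp only: power_add[symmetric] mk2)
    also have "\<dots> = (\<rho> ^ nn) ^ k" by (simp only: power_mult)
    finally show ?thesis by (simp add: rho_n)
  qed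
  then have "x * \<rho> ^ m = 1" using x by (simp only: mult.commute)
  then have "inverse x = \<rho> ^ m" by (rule inverse_unique)
  moreover have "int (m mod 7) = (- a) mod 7"
  proof -
    have "int ((m + k) mod 7) = 0" using mk by (simp only: of_nat_0)
    then have "(int m + int k) mod 7 = 0 mod 7" by (simp only: zmod_int of_nat_add of_nat_numeral mod_0)
    moreover have "int k mod 7 = a mod 7" using k by (simp add: zmod_int)
    ultimately have "(int m + int k - int k) mod 7 = (0 - a) mod 7" by (rule mod_diff_cong)
    then show ?thesis by (simp add: zmod_int)
  qed
  ultimately show ?thesis unfolding Dk_def by blast
qed

lemma minus_one_Dk: "- 1 \<in> Dk \<rho> 0"
proof -
  have "(\<rho> ^ (7 * rr)) ^ 2 = 1" using rho_n nn_eq by (simp add: power_mult[symmetric])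
  then have "\<rho> ^ (7 * rr) = 1 \<or> \<rho> ^ (7 * rr) = -1" by (simp add: power2_eq_1_iff)
  moreover have "\<rho> ^ (7 * rr) \<noteq> 1"
  proof
    assume "\<rho> ^ (7 * rr) = 1"
    then have "nn \<le> 7 * rr" using rho_order[OF pe, of "7 * rr"] rr_pos unfolding nn_def by simp
    then show False using nn_eq rr_pos by simp
  qed
  ultimately have "- 1 = \<rho> ^ (7 * rr)" by simp
  then show ?thesis unfolding Dk_def by auto
qed

definition "SS a b = (\<lambda>x. x + 1) ` Dk \<rho> a \<inter> Dk \<rho> b"

lemma SS_mem: "y \<in> SS a b \<longleftrightarrow> y - 1 \<in> Dk \<rho> a \<and> y \<in> Dk \<rho> b"
  unfolding SS_def by (auto simp: image_iff) (metis diff_add_cancel)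

lemma cyc_num_SS: "cyc_num \<rho> a b = card (SS a b)"
  unfolding cyc_num_def SS_def cyc_class_Dk ..

lemma swap_le: "card (SS a b) \<le> card (SS b a)"
proof (rule card_inj_on_le[of "\<lambda>y. 1 - y"])
  show "inj_on (\<lambda>y. 1 - y) (SS a b)" by (auto simp: inj_on_def)
  show "(\<lambda>y. 1 - y) ` SS a b \<subseteq> SS b a"
  proof
    fix z assume "z \<in> (\<lambda>y. 1 - y) ` SS a b"
    then obtain y where z: "z = 1 - y" and y: "y - 1 \<in> Dk \<rho> a" "y \<in> Dk \<rho> b"
      by (auto simp: SS_mem)
    have "(- 1) * y \<in> Dk \<rho> (0 + b)" by (rule Dk_mult[OF minus_one_Dk y(2)])
    moreover have "(- 1) * (y - 1) \<in> Dk \<rho> (0 + a)" by (rule Dk_mult[OF minus_one_Dk y(1)])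
    ultimately show "z \<in> SS b a" unfolding SS_mem z by simp
  qed
qed simp

lemma neg_le: "card (SS a b) \<le> card (SS (- a) (b - a))"
proof (rule card_inj_on_le[of "\<lambda>y. 1 + inverse (y - 1)"])
  show "inj_on (\<lambda>y. 1 + inverse (y - 1)) (SS a b)" by (auto simp: inj_on_def)
  show "(\<lambda>y. 1 + inverse (y - 1)) ` SS a b \<subseteq> SS (- a) (b - a)"
  proof
    fix z assume "z \<in> (\<lambda>y. 1 + inverse (y - 1)) ` SS a b"
    then obtain y where z: "z = 1 + inverse (y - 1)" and y: "y - 1 \<in> Dk \<rho> a" "y \<in> Dk \<rho> b"
      by (auto simp: SS_mem)
    have nz: "y - 1 \<noteq> 0" using Dk_nz y(1) by blast
    have i: "inverse (y - 1) \<in> Dk \<rho> (- a)" by (rule Dk_inv[OF y(1)])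
    have "y * inverse (y - 1) \<in> Dk \<rho> (b + - a)" by (rule Dk_mult[OF y(2) i])
    moreover have "z = y * inverse (y - 1)" using nz unfolding z by (simp add: field_simps)
    ultimately have A: "y * inverse (y - 1) \<in> Dk \<rho> (b - a)" and zeq: "z = y * inverse (y - 1)" by simp_all
    have zm1: "z - 1 = inverse (y - 1)" unfolding z by simp
    show "z \<in> SS (- a) (b - a)" unfolding SS_mem using i A zm1 zeq by metis
  qed
qed simp

lemma cyc_swap: "cyc_num \<rho> a b = cyc_num \<rho> b a"
  unfolding cyc_num_SS using swap_le[of a b] swap_le[of b a] by linarith

lemma cyc_neg: "cyc_num \<rho> a b = cyc_num \<rho> (- a) (b - a)"
proof -
  have e: "SS (- (- a)) (b - a - (- a)) = SS a b" by simp
  have f: "card (SS (- a) (b - a)) \<le> card (SS a b)" using neg_le[of "- a" "b - a"] unfolding e .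
  show ?thesis unfolding cyc_num_SS using neg_le[of a b] f by linarith
qed

lemma cyc_mod: "cyc_num \<rho> a b = cyc_num \<rho> (a mod 7) (b mod 7)"
proof -
  have "cyc_class \<rho> (a mod 7) = cyc_class \<rho> a" "cyc_class \<rho> (b mod 7) = cyc_class \<rho> b"
    unfolding cyc_class_def by simp_all
  then show ?thesis unfolding cyc_num_def by simp
qed

lemma orbit:
  assumes "(a mod 7, b mod 7) \<in> {(x, y), (y, x), ((- x) mod 7, (y - x) mod 7), ((y - x) mod 7, (- x) mod 7),
            ((- y) mod 7, (x - y) mod 7), ((x - y) mod 7, (- y) mod 7)}"
  shows "cyc_num \<rho> a b = cyc_num \<rho> x y"
proof -
  have s1: "cyc_num \<rho> ((- x) mod 7) ((y - x) mod 7) = cyc_num \<rho> x y"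
    using cyc_neg[of x y] cyc_mod[of "- x" "y - x"] by linarith
  have s2: "cyc_num \<rho> ((- y) mod 7) ((x - y) mod 7) = cyc_num \<rho> x y"
    using cyc_neg[of y x] cyc_mod[of "- y" "x - y"] cyc_swap[of x y] by linarith
  have m: "cyc_num \<rho> a b = cyc_num \<rho> (a mod 7) (b mod 7)" by (rule cyc_mod)
  have w1: "cyc_num \<rho> y x = cyc_num \<rho> x y" by (rule cyc_swap)
  have w2: "cyc_num \<rho> ((y - x) mod 7) ((- x) mod 7) = cyc_num \<rho> x y"
    using s1 cyc_swap[of "(y - x) mod 7" "(- x) mod 7"] by linarith
  have w3: "cyc_num \<rho> ((x - y) mod 7) ((- y) mod 7) = cyc_num \<rho> x y"
    using s2 cyc_swap[of "(x - y) mod 7" "(- y) mod 7"] by linarith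
  have c1: "(a mod 7, b mod 7) = (x, y) \<Longrightarrow> ?thesis" using m by simp
  have c2: "(a mod 7, b mod 7) = (y, x) \<Longrightarrow> ?thesis" using m w1 by simp
  have c3: "(a mod 7, b mod 7) = ((- x) mod 7, (y - x) mod 7) \<Longrightarrow> ?thesis" using m s1 by simp
  have c4: "(a mod 7, b mod 7) = ((y - x) mod 7, (- x) mod 7) \<Longrightarrow> ?thesis" using m w2 by simp
  have c5: "(a mod 7, b mod 7) = ((- y) mod 7, (x - y) mod 7) \<Longrightarrow> ?thesis" using m s2 by simp
  have c6: "(a mod 7, b mod 7) = ((x - y) mod 7, (- y) mod 7) \<Longrightarrow> ?thesis" using m w3 by simp
  show ?thesis using assms c1 c2 c3 c4 c5 c6 by blast
qed

end

theorem proposition3p2: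
  fixes \<rho> :: "'a::{finite,field}" and g h :: z23
  assumes "card (UNIV :: 'a set) mod 14 = 1"
    and "primitive_element \<rho>"
    and "g \<noteq> zero23" and "h \<noteq> zero23" and "g \<noteq> h"
  shows "cyc_num \<rho> (Psi1 (sub23 h g) - Psi1 g) (Psi1 h - Psi1 g) = cyc_num \<rho> 1 5
         \<and> cyc_num \<rho> (Psi2 (sub23 h g) - Psi2 g) (Psi2 h - Psi2 g) = cyc_num \<rho> 1 3"
proof -
  obtain g2 g1 g0 where g: "g = (g2, g1, g0)" by (cases g) auto
  obtain h2 h1 h0 where h: "h = (h2, h1, h0)" by (cases h) auto
  have A: "((Psi1 (sub23 h g) - Psi1 g) mod 7, (Psi1 h - Psi1 g) mod 7) \<in>
      {(1, 5), (5, 1), ((- 1) mod 7, (5 - 1) mod 7), ((5 - 1) mod 7, (- 1) mod 7),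
       ((- 5) mod 7, (1 - 5) mod 7), ((1 - 5) mod 7, (- 5) mod 7)}"
    using assms(3-5) unfolding g h
    by (cases g2; cases g1; cases g0; cases h2; cases h1; cases h0)
       (simp_all add: Psi1_def sub23_def zero23_def bval_def)
  have B: "((Psi2 (sub23 h g) - Psi2 g) mod 7, (Psi2 h - Psi2 g) mod 7) \<in>
      {(1, 3), (3, 1), ((- 1) mod 7, (3 - 1) mod 7), ((3 - 1) mod 7, (- 1) mod 7),
       ((- 3) mod 7, (1 - 3) mod 7), ((1 - 3) mod 7, (- 3) mod 7)}"
    using assms(3-5) unfolding g h
    by (cases g2; cases g1; cases g0; cases h2; cases h1; cases h0)
       (simp_all add: Psi2_def sub23_def zero23_def bval_def)
  show ?thesis
    using orbit[OF assms(1,2) A] orbit[OF assms(1,2) B] by simp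
qed

end
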